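(* Let $m\ge (K+1)^2$. The sampling rule of algorithm $\mathbf{AL_1}$ with batch size $m$ ensures that $N_a(lm)\ge (lm)^{1/2}-1$ for every arm $a\in\{1,\dots,K\}$ and every $l\ge1$ (for which the $l$-th batch has been completed).
   Context: There are $K$ arms (distributions) that can be sampled; $N_a(n)$ is the number of samples from arm $a$ among the first $n$ samples. Algorithm $\mathbf{AL_1}$ with batch size $m$ operates as follows. (1) Initialize by allocating $m$ samples to the arms in round-robin fashion, so that each arm gets at least $\lfloor m/K\rfloor$ samples; set $l=1$ (so $lm$ samples have been generated). (2) Compute a probability vector $t^*(\hat\mu(lm))\in\Sigma_K$ from the current empirical distributions $\hat\mu(lm)$ of the arms and check a stopping criterion; if not stopped: (3) compute the starvation $s_a=\big(((l+1)m)^{1/2}-N_a(lm)\big)^+$ of each arm $a$. (4) If $m\ge\sum_a s_a$, generate $s_a$ samples from each arm $a$ (first $s_1$ from arm 1, then $s_2$ from arm 2, etc.), and in addition draw $\max\{m-\sum_a s_a,0\}$ independent indices from the distribution $t^*(\hat\mu(lm))$ on $\{1,\dots,K\}$ and sample each arm $i$ as many times as $i$ occurs among them. (5) Otherwise, if $\sum_a s_a>m$, generate $\hat s_a$ samples from each arm $a$, where $(\hat s_a)$ solves the load balancing problem $\min\max_a\{s_a-\hat s_a\}$ subject to $s_a\ge\hat s_a\ge0$ for all $a$ and $\sum_a\hat s_a=m$. (6) Increment $l$ by 1 and return to step (2). *)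

theory Defs
  imports Complex_Main
begin

(* Arms are indexed 0..<K.  N l a  is  N_a(l m), the number of samples of arm a
   after l batches of size m. *)

(* starvation s_a = ((((l+1) m)^(1/2)) - N_a(lm))^+, rounded up to a whole
   number of samples ("nat" truncates negatives = positive part) *)
definition starv :: "nat \<Rightarrow> nat \<Rightarrow> nat \<Rightarrow> nat" where
  "starv m l n = nat \<lceil>sqrt (real ((l + 1) * m)) - real n\<rceil>"

definition load_balanced :: "nat \<Rightarrow> (nat \<Rightarrow> nat) \<Rightarrow> nat \<Rightarrow> (nat \<Rightarrow> nat) \<Rightarrow> bool" where
  "load_balanced K s m sh \<longleftrightarrow>
     (\<forall>a<K. sh a \<le> s a) \<and> (\<Sum>a<K. sh a) = m \<and>
     (\<forall>sh'. (\<forall>a<K. sh' a \<le> s a) \<and> (\<Sum>a<K. sh' a) = m \<longrightarrow>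
        (MAX a\<in>{..<K}. s a - sh a) \<le> (MAX a\<in>{..<K}. s a - sh' a))"

(* One batch (steps (3)-(5)) of AL_1 after l batches: counts N before, N' after.
   In step (4) the arms drawn from t^*(mu(lm)) are arbitrary (any outcome of the
   random draws), giving extra counts r with sum m - sum_a s_a. *)
definition AL1_step :: "nat \<Rightarrow> nat \<Rightarrow> nat \<Rightarrow> (nat \<Rightarrow> nat) \<Rightarrow> (nat \<Rightarrow> nat) \<Rightarrow> bool" where
  "AL1_step K m l N N' \<longleftrightarrow>
     (let s = (\<lambda>a. starv m l (N a)) in
      if (\<Sum>a<K. s a) \<le> m then
        (\<exists>r. (\<Sum>a<K. r a) = m - (\<Sum>a<K. s a) \<and> (\<forall>a<K. N' a = N a + s a + r a))
      else
        (\<exists>sh. load_balanced K s m sh \<and> (\<forall>a<K. N' a = N a + sh a)))"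

(* A run of AL_1 in which batches 1..L have been completed (the algorithm did
   not stop before the end of batch L). Step (1): round-robin initialisation. *)
definition AL1_run :: "nat \<Rightarrow> nat \<Rightarrow> nat \<Rightarrow> (nat \<Rightarrow> nat \<Rightarrow> nat) \<Rightarrow> bool" where
  "AL1_run K m L N \<longleftrightarrow>
     (\<forall>a<K. N 1 a = card {i. i < m \<and> i mod K = a}) \<and>
     (\<forall>l. 1 \<le> l \<and> l < L \<longrightarrow> AL1_step K m l (N l) (N (l + 1)))"

end

theory Submission
  imports Defs
begin

lemma sqrt_m_ge:
  fixes K m :: nat
  assumes "m \<ge> (K + 1)^2"
  shows "real K + 1 \<le> sqrt (real m)"
proof -
  have "real ((K+1)^2) \<le> real m" using assms by linarith
  hence "(real K + 1)^2 \<le> real m" by (simp add: add.commute)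
  thus ?thesis using real_le_rsqrt by blast
qed

lemma base_card:
  fixes K m a :: nat
  assumes "K \<ge> 1" "a < K"
  shows "m div K \<le> card {i. i < m \<and> i mod K = a}"
proof -
  have "(\<lambda>j. a + j * K) ` {..<m div K} \<subseteq> {i. i < m \<and> i mod K = a}"
  proof
    fix i assume "i \<in> (\<lambda>j. a + j * K) ` {..<m div K}"
    then obtain j where j: "j < m div K" "i = a + j * K" by auto
    have "a + j * K < K + j * K" using assms by simp
    also have "\<dots> = (j+1) * K" by simp
    also have "\<dots> \<le> (m div K) * K" using j by (intro mult_right_mono) auto
    also have "\<dots> \<le> m" by simp
    finally have "i < m" using j by simp
    moreover have "i mod K = a" using j assms by simp
    ultimately show "i \<in> {i. i < m \<and> i mod K = a}" by simp
  qed
  moreover have "inj_on (\<lambda>j. a + j * K) {..<m div K}"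
    using assms by (auto simp: inj_on_def)
  ultimately show ?thesis
    by (metis (no_types, lifting) card_image card_lessThan card_mono finite_lessThan
        finite_subset mem_Collect_eq subsetI lessThan_iff)
qed

lemma base_bound:
  fixes K m :: nat
  assumes "K \<ge> 1" "m \<ge> (K + 1)^2"
  shows "real (m div K) \<ge> sqrt (real m) - 1"
proof -
  define x where "x = sqrt (real m)"
  have x: "real K + 1 \<le> x" using sqrt_m_ge[OF assms(2)] x_def by simp
  have xx: "x * x = real m" using x_def by simp
  have "m mod K \<le> K - 1" using assms(1)
    by (metis Suc_pred' less_Suc_eq_le mod_less_divisor zero_less_iff_neq_zero not_one_le_zero)
  hence "real (m mod K) \<le> real K - 1" using assms(1) by linarith
  moreover have "real m = real (m div K) * real K + real (m mod K)"
    by (metis div_mult_mod_eq of_nat_add of_nat_mult)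
  ultimately have h: "real (m div K) * real K \<ge> real m - real K + 1" by linarith
  have "real K * x \<le> x * x" using x by (intro mult_right_mono) auto
  hence "real K * (x - 1) \<le> real (m div K) * real K" using h xx by (simp add: algebra_simps)
  hence "real K * (x - 1) \<le> real K * real (m div K)" by (simp add: mult.commute)
  hence "x - 1 \<le> real (m div K)" using assms(1) by (simp add: mult_le_cancel_left)
  thus ?thesis using x_def by simp
qed

lemma d_bound:
  fixes l m :: nat
  assumes "l \<ge> 1"
  shows "sqrt (real ((l+1)*m)) \<le> sqrt (real (l*m)) + sqrt (real m) / 2"
proof -
  define x where "x = sqrt (real m)"
  define y where "y = sqrt (real l)"
  have y1: "y \<ge> 1" using assms y_def by simp
  have x0: "x \<ge> 0" using x_def by simp
  have e1: "sqrt (real ((l+1)*m)) = sqrt (real l + 1) * x"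
    using x_def by (simp add: real_sqrt_mult[symmetric] algebra_simps)
  have e2: "sqrt (real (l*m)) = y * x" using x_def y_def by (simp add: real_sqrt_mult)
  have yy: "y * y = real l" using y_def by simp
  have "real l + 1 \<le> (y + 1/2)^2"
    using y1 yy by (simp add: power2_eq_square algebra_simps)
  hence "sqrt (real l + 1) \<le> y + 1/2" using y1 real_le_lsqrt real_sqrt_le_iff
    by (metis add_nonneg_nonneg le_numeral_extra(1) order_trans real_sqrt_le_mono real_sqrt_unique
        zero_le_divide_iff zero_le_numeral)
  hence "sqrt (real l + 1) * x \<le> (y + 1/2) * x" using x0 by (intro mult_right_mono)
  thus ?thesis using e1 e2 x_def by (simp add: algebra_simps)
qed

lemma starv_bound:
  fixes l m n :: nat
  assumes "l \<ge> 1" "real n \<ge> sqrt (real (l*m)) - 1"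
  shows "real (starv m l n) \<le> sqrt (real m) / 2 + 2"
proof -
  define y where "y = sqrt (real ((l + 1) * m)) - real n"
  have "y \<le> sqrt (real m) / 2 + 1" using d_bound[OF assms(1), of m] assms(2) y_def by linarith
  moreover have "real_of_int \<lceil>y\<rceil> < y + 1" by linarith
  ultimately have "real_of_int \<lceil>y\<rceil> \<le> sqrt (real m) / 2 + 2" by linarith
  moreover have "sqrt (real m) \<ge> 0" by simp
  ultimately show ?thesis unfolding starv_def y_def[symmetric]
    by (cases "\<lceil>y\<rceil> \<ge> 0") auto
qed

lemma starv_ge:
  "real n + real (starv m l n) \<ge> sqrt (real ((l + 1) * m))"
  unfolding starv_def by linarith

lemma step:
  fixes K m l :: nat and N N' :: "nat \<Rightarrow> nat"
  assumes K: "K \<ge> 1" and m: "m \<ge> (K + 1)^2" and l: "l \<ge> 1"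
    and IH: "\<forall>a<K. real (N a) \<ge> sqrt (real (l * m)) - 1"
    and st: "AL1_step K m l N N'"
  shows "\<forall>a<K. real (N' a) \<ge> sqrt (real ((l+1) * m)) - 1"
proof -
  define s where "s = (\<lambda>a. starv m l (N a))"
  define x where "x = sqrt (real m)"
  have x: "real K + 1 \<le> x" using sqrt_m_ge[OF m] x_def by simp
  have xx: "x * x = real m" using x_def by simp
  have "real (\<Sum>a<K. s a) = (\<Sum>a<K. real (s a))" by simp
  also have "\<dots> \<le> (\<Sum>a<K. x / 2 + 2)"
    using starv_bound[OF l] IH unfolding s_def x_def by (intro sum_mono) auto
  also have "\<dots> = real K * (x/2 + 2)" by simp
  also have "\<dots> \<le> (x - 1) * (x/2 + 2)" using x by (intro mult_right_mono) auto
  also have "\<dots> \<le> x * x" proof -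
    have "0 \<le> (x - 3/2)^2" by simp
    hence "x * 3 \<le> x * x + 9/4" by (simp add: power2_eq_square algebra_simps)
    thus ?thesis by (simp add: field_simps)
  qed
  finally have "(\<Sum>a<K. s a) \<le> m" using xx by linarith
  then obtain r where r: "\<forall>a<K. N' a = N a + s a + r a"
    using st unfolding AL1_step_def s_def Let_def by auto
  show ?thesis
  proof (intro allI impI)
    fix a assume "a < K"
    hence "real (N' a) \<ge> real (N a) + real (s a)" using r by simp
    thus "real (N' a) \<ge> sqrt (real ((l+1) * m)) - 1"
      using starv_ge[where n="N a" and m=m and l=l] unfolding s_def by linarith
  qed
qed

theorem lemma8:
  fixes K m L :: nat and N :: "nat \<Rightarrow> nat \<Rightarrow> nat"
  assumes "K \<ge> 1"
    and "m \<ge> (K + 1)^2"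
    and "AL1_run K m L N"
  shows "\<forall>l a. 1 \<le> l \<and> l \<le> L \<and> a < K \<longrightarrow>
           real (N l a) \<ge> sqrt (real (l * m)) - 1"
proof -
  have main: "\<forall>a<K. real (N l a) \<ge> sqrt (real (l * m)) - 1" if "1 \<le> l" "l \<le> L" for l
    using that
  proof (induction l rule: dec_induct)
    case base
    show ?case
    proof (intro allI impI)
      fix a assume a: "a < K"
      have "N 1 a = card {i. i < m \<and> i mod K = a}" using assms(3) a unfolding AL1_run_def by auto
      hence "m div K \<le> N 1 a" using base_card[OF assms(1) a] by simp
      thus "real (N 1 a) \<ge> sqrt (real (1 * m)) - 1" using base_bound[OF assms(1,2)] by simp
    qed
  next
    case (step n)
    have "AL1_step K m n (N n) (N (n + 1))"
      using assms(3) step unfolding AL1_run_def by auto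
    moreover have "\<forall>a<K. real (N n a) \<ge> sqrt (real (n * m)) - 1" using step by simp
    ultimately show ?case
      using Submission.step[OF assms(1,2) step(1)] by simp
  qed
  thus ?thesis by blast
qed

end
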